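(* Let $R$ be an inp-minimal integral domain. Then the set of prime ideals of $R$ is linearly ordered by inclusion. In particular, every proper radical ideal of $R$ is prime, and there exists $N\in\mathbb N$ such that for all $a,b\in R$, either $b^N\in aR$ or $a^N\in bR$.
   Context: Rings are commutative with identity. A ring is inp-minimal if its theory in the language of rings $(+,\cdot,0,1)$ has burden $1$ (no inp-pattern of depth $2$ in one variable). $aR$ denotes the principal ideal generated by $a$. *)

theory Defs
  imports Main
begin

datatype rtm = RVar nat | RZero | ROne | RAdd rtm rtm | RMul rtm rtm

datatype rfm = REq rtm rtm | RNot rfm | RAnd rfm rfm | REx nat rfm

primrec tval :: "(nat \<Rightarrow> 'a::comm_ring_1) \<Rightarrow> rtm \<Rightarrow> 'a" where
  "tval e (RVar v) = e v"
| "tval e RZero = 0"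
| "tval e ROne = 1"
| "tval e (RAdd s t) = tval e s + tval e t"
| "tval e (RMul s t) = tval e s * tval e t"

primrec fsat :: "(nat \<Rightarrow> 'a::comm_ring_1) \<Rightarrow> rfm \<Rightarrow> bool" where
  "fsat e (REq s t) = (tval e s = tval e t)"
| "fsat e (RNot f) = (\<not> fsat e f)"
| "fsat e (RAnd f g) = (fsat e f \<and> fsat e g)"
| "fsat e (REx v f) = (\<exists>c. fsat (e(v := c)) f)"

text \<open>A formula phi(x, y) is read with x = variable 0 and the parameter
  tuple y occupying variables 1, 2, ...; a parameter tuple is a function
  nat => 'a (only finitely many entries matter).\<close>
definition holds_at :: "rfm \<Rightarrow> 'a::comm_ring_1 \<Rightarrow> (nat \<Rightarrow> 'a) \<Rightarrow> bool" where
  "holds_at phi x a = fsat (\<lambda>v. case v of 0 \<Rightarrow> x | Suc i \<Rightarrow> a i) phi"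

text \<open>Finite approximations (of every length n) of an inp-pattern of depth 2
  in one variable, realised inside the ring itself. By compactness, an
  inp-pattern of depth 2 exists in a model of Th(R) iff all these finite
  approximations exist in R.\<close>
definition inp_pattern2 :: "'a::comm_ring_1 itself \<Rightarrow> rfm \<Rightarrow> rfm \<Rightarrow> nat \<Rightarrow> nat \<Rightarrow> bool" where
  "inp_pattern2 _ phi psi k1 k2 \<longleftrightarrow>
     (\<forall>n. \<exists>(a :: nat \<Rightarrow> nat \<Rightarrow> 'a) (b :: nat \<Rightarrow> nat \<Rightarrow> 'a).
        (\<forall>S. S \<subseteq> {..<n} \<and> card S = k1 \<longrightarrow> \<not> (\<exists>x. \<forall>i\<in>S. holds_at phi x (a i))) \<and>
        (\<forall>S. S \<subseteq> {..<n} \<and> card S = k2 \<longrightarrow> \<not> (\<exists>x. \<forall>j\<in>S. holds_at psi x (b j))) \<and>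
        (\<forall>i<n. \<forall>j<n. \<exists>x. holds_at phi x (a i) \<and> holds_at psi x (b j)))"

definition inp_minimal :: "'a::comm_ring_1 itself \<Rightarrow> bool" where
  "inp_minimal T \<longleftrightarrow> \<not> (\<exists>phi psi k1 k2. inp_pattern2 T phi psi k1 k2)"

definition is_ideal :: "'a::comm_ring_1 set \<Rightarrow> bool" where
  "is_ideal I \<longleftrightarrow> 0 \<in> I \<and> (\<forall>x\<in>I. \<forall>y\<in>I. x + y \<in> I) \<and> (\<forall>r. \<forall>x\<in>I. r * x \<in> I)"

definition prime_ideal :: "'a::comm_ring_1 set \<Rightarrow> bool" where
  "prime_ideal P \<longleftrightarrow> is_ideal P \<and> P \<noteq> UNIV \<and> (\<forall>a b. a * b \<in> P \<longrightarrow> a \<in> P \<or> b \<in> P)"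

definition radical_ideal :: "'a::comm_ring_1 set \<Rightarrow> bool" where
  "radical_ideal I \<longleftrightarrow> is_ideal I \<and> (\<forall>a (n::nat). a ^ n \<in> I \<longrightarrow> a \<in> I)"

definition principal_ideal :: "'a::comm_ring_1 \<Rightarrow> 'a set" where
  "principal_ideal a = {a * r | r. True}"

end

theory Submission
  imports Defs
begin

definition dphi :: rfm where
  "dphi = RAnd (REx 3 (REq (RVar 0) (RMul (RVar 1) (RVar 3))))
               (RNot (REx 3 (REq (RVar 0) (RMul (RVar 2) (RVar 3)))))"

lemma holds_dphi:
  "holds_at dphi (x::'a::comm_ring_1) p \<longleftrightarrow> p 0 dvd x \<and> \<not> p 1 dvd x"
  by (auto simp: dphi_def holds_at_def dvd_def)

definition pars :: "'a::comm_ring_1 \<Rightarrow> nat \<Rightarrow> nat \<Rightarrow> 'a" where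
  "pars c i = (\<lambda>k. if k = 0 then c ^ i else c ^ Suc i)"

lemma holds_pars:
  "holds_at dphi (x::'a::comm_ring_1) (pars c i) \<longleftrightarrow> c ^ i dvd x \<and> \<not> c ^ Suc i dvd x"
  by (simp add: holds_dphi pars_def)

lemma incons2:
  fixes c :: "'a::comm_ring_1"
  assumes "card S = 2"
  shows "\<not> (\<exists>x. \<forall>i\<in>S. holds_at dphi x (pars c i))"
proof
  assume "\<exists>x. \<forall>i\<in>S. holds_at dphi x (pars c i)"
  then obtain x where x: "\<forall>i\<in>S. c ^ i dvd x \<and> \<not> c ^ Suc i dvd x"
    by (auto simp: holds_pars)
  from assms obtain i j where S: "S = {i, j}" "i \<noteq> j" by (auto simp: card_2_iff)
  have key: "False" if "i' < j'" "i' \<in> S" "j' \<in> S" for i' j'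
  proof -
    have "c ^ Suc i' dvd c ^ j'" using that(1) by (intro le_imp_power_dvd) simp
    then have "c ^ Suc i' dvd x" using x that(3) dvd_trans by blast
    then show False using x that(2) by blast
  qed
  show False
  proof (cases "i < j")
    case True then show ?thesis using key[of i j] S by auto
  next
    case False then have "j < i" using S by auto
    then show ?thesis using key[of j i] S by auto
  qed
qed

lemma pattern:
  assumes H: "\<forall>N. \<exists>a b :: 'a::idom. \<not> a dvd b ^ N \<and> \<not> b dvd a ^ N"
  shows "inp_pattern2 TYPE('a) dphi dphi 2 2"
  unfolding inp_pattern2_def
proof
  fix n
  obtain a b :: 'a where ab: "\<not> a dvd b ^ n" "\<not> b dvd a ^ n" using H by blast
  have paths: "\<exists>x. holds_at dphi x (pars a i) \<and> holds_at dphi x (pars b j)"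
    if "i < n" "j < n" for i j
  proof -
    have a0: "a \<noteq> 0" using ab(2) that(1) by (cases n) auto
    have b0: "b \<noteq> 0" using ab(1) that(1) by (cases n) auto
    have na: "\<not> a dvd b ^ j"
    proof
      assume "a dvd b ^ j"
      moreover have "b ^ j dvd b ^ n" using that by (intro le_imp_power_dvd) simp
      ultimately show False using ab(1) dvd_trans by blast
    qed
    have nb: "\<not> b dvd a ^ i"
    proof
      assume "b dvd a ^ i"
      moreover have "a ^ i dvd a ^ n" using that by (intro le_imp_power_dvd) simp
      ultimately show False using ab(2) dvd_trans by blast
    qed
    have "\<not> a ^ Suc i dvd a ^ i * b ^ j"
    proof
      assume "a ^ Suc i dvd a ^ i * b ^ j"
      then have "a ^ i * a dvd a ^ i * b ^ j" by (simp add: mult.commute)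
      then have "a dvd b ^ j" using a0 by (subst (asm) dvd_mult_cancel_left) auto
      then show False using na by blast
    qed
    moreover have "\<not> b ^ Suc j dvd a ^ i * b ^ j"
    proof
      assume "b ^ Suc j dvd a ^ i * b ^ j"
      then have "b ^ j * b dvd b ^ j * a ^ i" by (simp add: mult.commute)
      then have "b dvd a ^ i" using b0 by (subst (asm) dvd_mult_cancel_left) auto
      then show False using nb by blast
    qed
    ultimately show ?thesis
      by (intro exI[of _ "a ^ i * b ^ j"]) (simp add: holds_pars)
  qed
  show "\<exists>(aa :: nat \<Rightarrow> nat \<Rightarrow> 'a) bb.
        (\<forall>S. S \<subseteq> {..<n} \<and> card S = 2 \<longrightarrow> \<not> (\<exists>x. \<forall>i\<in>S. holds_at dphi x (aa i))) \<and>
        (\<forall>S. S \<subseteq> {..<n} \<and> card S = 2 \<longrightarrow> \<not> (\<exists>x. \<forall>j\<in>S. holds_at dphi x (bb j))) \<and>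
        (\<forall>i<n. \<forall>j<n. \<exists>x. holds_at dphi x (aa i) \<and> holds_at dphi x (bb j))"
  proof -
    have h1: "\<forall>S. S \<subseteq> {..<n} \<and> card S = 2 \<longrightarrow> \<not> (\<exists>x. \<forall>i\<in>S. holds_at dphi x (pars a i))"
      using incons2 by blast
    have h2: "\<forall>S. S \<subseteq> {..<n} \<and> card S = 2 \<longrightarrow> \<not> (\<exists>x. \<forall>j\<in>S. holds_at dphi x (pars b j))"
      using incons2 by blast
    have h3: "\<forall>i<n. \<forall>j<n. \<exists>x. holds_at dphi x (pars a i) \<and> holds_at dphi x (pars b j)"
      using paths by blast
    show ?thesis using h1 h2 h3 by (intro exI[of _ "pars a"] exI[of _ "pars b"]) simp
  qed
qed

lemma pi_dvd: "x \<in> principal_ideal a \<longleftrightarrow> a dvd x"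
  by (auto simp: principal_ideal_def dvd_def)

theorem mainTheorem3:
  assumes "inp_minimal TYPE('a::idom)"
  shows "(\<forall>P Q :: 'a set. prime_ideal P \<and> prime_ideal Q \<longrightarrow> P \<subseteq> Q \<or> Q \<subseteq> P)
       \<and> (\<forall>I :: 'a set. radical_ideal I \<and> I \<noteq> UNIV \<longrightarrow> prime_ideal I)
       \<and> (\<exists>N::nat. \<forall>a b :: 'a. b ^ N \<in> principal_ideal a \<or> a ^ N \<in> principal_ideal b)"
proof -
  have "\<exists>N. \<forall>a b :: 'a. a dvd b ^ N \<or> b dvd a ^ N"
  proof (rule ccontr)
    assume "\<not> ?thesis"
    then have "\<forall>N. \<exists>a b :: 'a. \<not> a dvd b ^ N \<and> \<not> b dvd a ^ N" by blast
    then have "inp_pattern2 TYPE('a) dphi dphi 2 2" by (rule pattern)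
    then show False using assms unfolding inp_minimal_def by blast
  qed
  then obtain N where N: "\<And>a b :: 'a. a dvd b ^ N \<or> b dvd a ^ N" by blast
  have idl: "x \<in> J" if h: "is_ideal J" "a \<in> J" "a dvd x" for J :: "'a set" and a x
  proof -
    obtain k where "x = a * k" using h(3) by (auto simp: dvd_def)
    then have "x = k * a" by (simp add: mult.commute)
    then show ?thesis using h(1,2) by (simp add: is_ideal_def)
  qed
  have ppow: "b \<in> P" if pP: "prime_ideal P" and bn: "b ^ n \<in> P" for P :: "'a set" and b n
  proof -
    have mul: "\<And>r x. x \<in> P \<Longrightarrow> r * x \<in> P" using pP unfolding prime_ideal_def is_ideal_def by blast
    have pr: "\<And>a b. a * b \<in> P \<Longrightarrow> a \<in> P \<or> b \<in> P" using pP unfolding prime_ideal_def by blast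
    have nU: "P \<noteq> UNIV" using pP unfolding prime_ideal_def by blast
    show ?thesis using bn
    proof (induction n)
      case 0
      then have "1 \<in> P" by simp
      then have "\<And>r. r \<in> P" using mul[of 1] by (metis mult.right_neutral)
      then show ?case by blast
    next
      case (Suc n)
      have "b * b ^ n \<in> P" using Suc.prems by simp
      then have "b \<in> P \<or> b ^ n \<in> P" using pr by blast
      then show ?case using Suc.IH by blast
    qed
  qed
  have p1: "P \<subseteq> Q \<or> Q \<subseteq> P" if "prime_ideal P" "prime_ideal Q" for P Q :: "'a set"
  proof (rule ccontr)
    assume "\<not> ?thesis"
    then obtain a b where ab: "a \<in> P" "a \<notin> Q" "b \<in> Q" "b \<notin> P" by blast
    have iP: "is_ideal P" and iQ: "is_ideal Q" using that by (auto simp: prime_ideal_def)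
    from N[of a b] show False
    proof
      assume "a dvd b ^ N"
      then have "b ^ N \<in> P" using idl iP ab(1) by blast
      then show False using ppow that(1) ab(4) by blast
    next
      assume "b dvd a ^ N"
      then have "a ^ N \<in> Q" using idl iQ ab(3) by blast
      then show False using ppow that(2) ab(2) by blast
    qed
  qed
  have p2: "prime_ideal I" if "radical_ideal I" "I \<noteq> UNIV" for I :: "'a set"
  proof -
    have iI: "is_ideal I" and rI: "\<And>a n. a ^ n \<in> I \<Longrightarrow> a \<in> I"
      using that(1) by (auto simp: radical_ideal_def)
    have "a \<in> I \<or> b \<in> I" if ab: "a * b \<in> I" for a b
    proof -
      from N[of a b] show ?thesis
      proof
        assume "a dvd b ^ N"
        then obtain k where "b ^ N = a * k" by (auto simp: dvd_def)
        then have "b ^ Suc N = k * (a * b)" by (simp add: algebra_simps)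
        moreover have "k * (a * b) \<in> I" using iI ab unfolding is_ideal_def by blast
        ultimately have "b ^ Suc N \<in> I" by metis
        then show ?thesis using rI by blast
      next
        assume "b dvd a ^ N"
        then obtain k where "a ^ N = b * k" by (auto simp: dvd_def)
        then have "a ^ Suc N = k * (a * b)" by (simp add: algebra_simps)
        moreover have "k * (a * b) \<in> I" using iI ab unfolding is_ideal_def by blast
        ultimately have "a ^ Suc N \<in> I" by metis
        then show ?thesis using rI by blast
      qed
    qed
    then show ?thesis using iI that(2) by (simp add: prime_ideal_def)
  qed
  show ?thesis using p1 p2 N by (auto simp: pi_dvd)
qed

end
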